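(* Let $G=(V,E)$ be an $S$-regular graph with cells $V_1,\dots,V_k$, $n_i=|V_i|$, let $C\subsetneq V$, $m=|V|-|C|$, and $c_i=|C\cap V_i|/n_i$. Then for every $\ell\ge0$ the total number of walks of length $\ell$ in $G$ that avoid $C$ (i.e. all of whose vertices lie in $V\setminus C$) is at most \[m\Bigl(\lambda_S\bigl(1-\min_{1\le i\le k}c_i\bigr)+\lambda_B\bigl(\min_{1\le i\le k}c_i\bigr)\Bigr)^{\ell}.\]
   Context: All graphs are simple, undirected and connected. $G$ is $S$-regular ($S=(s_{ij})$ a $k\times k$ nonnegative integer matrix) if $V$ is partitioned into nonempty cells $V_1,\dots,V_k$ such that every vertex of $V_i$ has exactly $s_{ij}$ neighbours in $V_j$. Let $A$ be the adjacency matrix of $G$, $|V|=n>k$. The subspace $W=\mathrm{span}\{\mathbf{1}_{V_1},\dots,\mathbf{1}_{V_k}\}$ is $A$-invariant and the eigenvalues of $A$ on $W$ are the eigenvalues of $S$; the eigenvalues of $A$ on $W^\perp$ ($n-k$ of them, with multiplicity) are the bulk eigenvalues. $\lambda_S$ is the largest eigenvalue of $S$ and $\lambda_B$ is the largest absolute value of a bulk eigenvalue. *)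

theory Defs
  imports Main Complex_Main
begin

definition simple_connected_graph :: "('v::finite \<Rightarrow> 'v \<Rightarrow> bool) \<Rightarrow> bool" where
  "simple_connected_graph E \<longleftrightarrow>
     (\<forall>u v. E u v \<longrightarrow> E v u) \<and> (\<forall>v. \<not> E v v) \<and> (\<forall>u v. E\<^sup>*\<^sup>* u v)"

definition cell :: "('v \<Rightarrow> nat) \<Rightarrow> nat \<Rightarrow> 'v set" where
  "cell p i = {v. p v = i}"

definition S_regular ::
  "('v::finite \<Rightarrow> 'v \<Rightarrow> bool) \<Rightarrow> nat \<Rightarrow> ('v \<Rightarrow> nat) \<Rightarrow> (nat \<Rightarrow> nat \<Rightarrow> nat) \<Rightarrow> bool" where
  "S_regular E k p S \<longleftrightarrow>
     (\<forall>v. p v < k) \<and> (\<forall>i<k. cell p i \<noteq> {}) \<and>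
     (\<forall>v. \<forall>j<k. card {w. E v w \<and> p w = j} = S (p v) j)"

definition adj_op :: "('v::finite \<Rightarrow> 'v \<Rightarrow> bool) \<Rightarrow> ('v \<Rightarrow> real) \<Rightarrow> 'v \<Rightarrow> real" where
  "adj_op E x v = (\<Sum>w\<in>{w. E v w}. x w)"

text \<open>x is orthogonal to W = span of the cell indicator vectors.\<close>

definition perp_cells :: "nat \<Rightarrow> ('v::finite \<Rightarrow> nat) \<Rightarrow> ('v \<Rightarrow> real) \<Rightarrow> bool" where
  "perp_cells k p x \<longleftrightarrow> (\<forall>i<k. (\<Sum>v\<in>cell p i. x v) = 0)"

text \<open>Bulk eigenvalues: eigenvalues of A restricted to the (A-invariant) subspace W^perp.\<close>

definition bulk_eigenvalues ::
  "('v::finite \<Rightarrow> 'v \<Rightarrow> bool) \<Rightarrow> nat \<Rightarrow> ('v \<Rightarrow> nat) \<Rightarrow> real set" where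
  "bulk_eigenvalues E k p =
     {\<mu>. \<exists>x. x \<noteq> (\<lambda>_. 0) \<and> perp_cells k p x \<and> adj_op E x = (\<lambda>v. \<mu> * x v)}"

definition lambda_B :: "('v::finite \<Rightarrow> 'v \<Rightarrow> bool) \<Rightarrow> nat \<Rightarrow> ('v \<Rightarrow> nat) \<Rightarrow> real" where
  "lambda_B E k p = Max (abs ` bulk_eigenvalues E k p)"

text \<open>(Real) eigenvalues of the k x k quotient matrix S (all its eigenvalues are real,
  being eigenvalues of A on W).\<close>

definition matrix_eigenvalues :: "nat \<Rightarrow> (nat \<Rightarrow> nat \<Rightarrow> nat) \<Rightarrow> real set" where
  "matrix_eigenvalues k S =
     {\<mu>. \<exists>y::nat \<Rightarrow> real. (\<exists>i<k. y i \<noteq> 0) \<and>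
          (\<forall>i<k. (\<Sum>j<k. real (S i j) * y j) = \<mu> * y i)}"

definition lambda_S :: "nat \<Rightarrow> (nat \<Rightarrow> nat \<Rightarrow> nat) \<Rightarrow> real" where
  "lambda_S k S = Max (matrix_eigenvalues k S)"

definition avoiding_walks :: "('v \<Rightarrow> 'v \<Rightarrow> bool) \<Rightarrow> 'v set \<Rightarrow> nat \<Rightarrow> 'v list set" where
  "avoiding_walks E C l =
     {xs. length xs = Suc l \<and> successively E xs \<and> set xs \<inter> C = {}}"

end

theory Submission
  imports Defs "HOL-Analysis.Analysis" "HOL-Library.Function_Algebras"
begin


definition ip :: "('v::finite \<Rightarrow> real) \<Rightarrow> ('v \<Rightarrow> real) \<Rightarrow> real" where
  "ip x y = (\<Sum>v\<in>UNIV. x v * y v)"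

definition sc :: "real \<Rightarrow> ('v \<Rightarrow> real) \<Rightarrow> 'v \<Rightarrow> real" where
  "sc c x = (\<lambda>v. c * x v)"

definition lin :: "(('v \<Rightarrow> real) \<Rightarrow> ('v \<Rightarrow> real)) \<Rightarrow> bool" where
  "lin T \<longleftrightarrow> (\<forall>x y. T (x + y) = T x + T y) \<and> (\<forall>c x. T (sc c x) = sc c (T x))"

definition subsp :: "('v \<Rightarrow> real) set \<Rightarrow> bool" where
  "subsp L \<longleftrightarrow> (\<forall>x\<in>L. \<forall>y\<in>L. x + y \<in> L) \<and> (\<forall>c. \<forall>x\<in>L. sc c x \<in> L)"

lemma ip_comm: "ip x y = ip y x"
  unfolding ip_def by (simp add: mult.commute)

lemma ip_add_left: "ip (x + y) z = ip x z + ip y z"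
  unfolding ip_def by (simp add: algebra_simps sum.distrib)

lemma ip_add_right: "ip z (x + y) = ip z x + ip z y"
  unfolding ip_def by (simp add: algebra_simps sum.distrib)

lemma ip_sc_left: "ip (sc c x) z = c * ip x z"
  unfolding ip_def sc_def by (simp add: algebra_simps sum_distrib_left)

lemma ip_sc_right: "ip z (sc c x) = c * ip z x"
  unfolding ip_def sc_def by (simp add: algebra_simps sum_distrib_left)

lemma ip_self_ge0: "ip x x \<ge> 0"
  unfolding ip_def by (simp add: sum_nonneg)

lemma ip_self_eq0: "ip x x = 0 \<longleftrightarrow> x = (\<lambda>_. 0)"
proof
  assume "ip x x = 0"
  then have "\<forall>v\<in>UNIV. x v * x v = 0"
    unfolding ip_def by (subst sum_nonneg_eq_0_iff[symmetric]) auto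
  then show "x = (\<lambda>_. 0)" by auto
qed (simp add: ip_def)

lemma lin_add: "lin T \<Longrightarrow> T (x + y) = T x + T y" by (simp add: lin_def)
lemma lin_sc: "lin T \<Longrightarrow> T (sc c x) = sc c (T x)" by (simp add: lin_def)

lemma sc_0: "sc 0 x = (\<lambda>_. 0)" by (simp add: sc_def)

lemma variational:
  assumes T: "lin T" and sym: "\<And>x y. ip (T x) y = ip x (T y)"
    and L: "subsp L" and inv: "\<And>x. x \<in> L \<Longrightarrow> T x \<in> L"
    and z: "z \<in> L" and mx: "\<And>x. x \<in> L \<Longrightarrow> ip x (T x) \<le> \<mu> * ip x x"
    and eq: "ip z (T z) = \<mu> * ip z z"
  shows "T z = sc \<mu> z"
proof -
  define y where "y = T z + sc (-\<mu>) z"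
  have yL: "y \<in> L" using L inv z unfolding y_def subsp_def by blast
  define d where "d = ip y y"
  define e where "e = ip y (T y) - \<mu> * ip y y"
  have e0: "e \<le> 0" using mx[OF yL] unfolding e_def by simp
  have dy: "ip y (T z) - \<mu> * ip y z = d"
    unfolding d_def by (simp add: y_def ip_add_right ip_sc_right)
  have key: "2 * t * d + t^2 * e \<le> 0" for t
  proof -
    have xt: "z + sc t y \<in> L" using L z yL unfolding subsp_def by blast
    have "ip (z + sc t y) (T (z + sc t y)) \<le> \<mu> * ip (z + sc t y) (z + sc t y)"
      by (rule mx[OF xt])
    moreover have "ip (z + sc t y) (T (z + sc t y)) = ip z (T z) + 2 * t * ip y (T z) + t^2 * ip y (T y)"
      using sym[of z y] sym[of y z]
      by (simp add: lin_add[OF T] lin_sc[OF T] ip_add_left ip_add_right ip_sc_left ip_sc_right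
           ip_comm[of z "T y"] ip_comm[of "T z" y] power2_eq_square algebra_simps)
    moreover have "ip (z + sc t y) (z + sc t y) = ip z z + 2 * t * ip y z + t^2 * ip y y"
      by (simp add: ip_add_left ip_add_right ip_sc_left ip_sc_right ip_comm[of z y]
           power2_eq_square algebra_simps)
    ultimately show ?thesis using eq dy unfolding e_def
      by (simp add: algebra_simps)
  qed
  have "d = 0"
  proof (rule ccontr)
    assume "d \<noteq> 0"
    then have dp: "d > 0" using ip_self_ge0[of y] unfolding d_def by linarith
    define t where "t = d / (1 - e)"
    have "2 * t * d + t^2 * e \<le> 0" by (rule key)
    moreover have tp: "t > 0" using dp e0 unfolding t_def by simp
    moreover have "t * e \<ge> - d"
    proof -
      have "e / (1 - e) \<ge> -1" using e0 by (simp add: divide_simps)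
      then have "d * (e / (1 - e)) \<ge> d * (-1)" using dp by (intro mult_left_mono) auto
      then show ?thesis unfolding t_def by simp
    qed
    moreover have "2 * t * d + t^2 * e = t * (2 * d + t * e)" by (simp add: power2_eq_square algebra_simps)
    moreover have "t * (2 * d + t * e) > 0" using tp calculation dp by (intro mult_pos_pos) auto
    ultimately show False by linarith
  qed
  then have "y = (\<lambda>_. 0)" using ip_self_eq0 unfolding d_def by blast
  then show ?thesis unfolding y_def sc_def by (auto simp: fun_eq_iff)
qed

definition vf :: "('v::finite \<Rightarrow> real) \<Rightarrow> real^'v" where
  "vf x = (\<chi> v. x v)"

lemma vf_nth[simp]: "vf x $ v = x v" by (simp add: vf_def)
lemma fv_vf[simp]: "vec_nth (vf x) = x" by (simp add: fun_eq_iff)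
lemma vf_inj: "inj vf" by (intro injI) (metis fv_vf)
lemma inner_vf: "vf x \<bullet> vf y = ip x y"
  by (simp add: inner_vec_def ip_def)
lemma vf_add: "vf (x + y) = vf x + vf y" by (simp add: vec_eq_iff)
lemma vf_sc: "vf (sc c x) = c *\<^sub>R vf x" by (simp add: vec_eq_iff sc_def)

lemma lin_zero: "lin T \<Longrightarrow> T (\<lambda>_. 0) = (\<lambda>_. 0)"
  using lin_sc[of T 0 "\<lambda>_. 0"] by (simp add: sc_def)

lemma ip_zero_left[simp]: "ip (\<lambda>_. 0) y = 0" by (simp add: ip_def)

lemma exists_max:
  fixes L :: "('v::finite \<Rightarrow> real) set"
  assumes T: "lin T" and L: "subsp L" and x0: "x0 \<in> L" "x0 \<noteq> (\<lambda>_. 0)"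
  shows "\<exists>z\<in>L. ip z z = 1 \<and> (\<forall>x\<in>L. ip x (T x) \<le> ip z (T z) * ip x x)"
proof -
  define L' where "L' = vf ` L"
  define T' where "T' X = vf (T (\<lambda>v. X $ v))" for X :: "real^'v"
  have sub: "subspace L'"
    unfolding subspace_def L'_def
  proof safe
    have "sc 0 x0 \<in> L" using L x0 unfolding subsp_def by blast
    moreover have "vf (sc 0 x0) = 0" by (simp add: vec_eq_iff sc_def)
    ultimately show "0 \<in> vf ` L" by (metis image_eqI)
  next
    fix x y assume "x \<in> L" "y \<in> L"
    then have "x + y \<in> L" using L unfolding subsp_def by blast
    then show "vf x + vf y \<in> vf ` L" by (metis vf_add image_eqI)
  next
    fix c x assume "x \<in> L"
    then have "sc c x \<in> L" using L unfolding subsp_def by blast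
    then show "c *\<^sub>R vf x \<in> vf ` L" by (metis vf_sc image_eqI)
  qed
  have linT': "linear T'"
  proof (rule linearI)
    fix X Y :: "real^'v"
    have e: "vec_nth (X + Y) = vec_nth X + vec_nth Y" by (auto simp: fun_eq_iff)
    show "T' (X + Y) = T' X + T' Y" unfolding T'_def by (simp only: e lin_add[OF T] vf_add)
  next
    fix c and X :: "real^'v"
    have e: "vec_nth (c *\<^sub>R X) = sc c (vec_nth X)" by (auto simp: sc_def fun_eq_iff)
    show "T' (c *\<^sub>R X) = c *\<^sub>R T' X" unfolding T'_def by (simp only: e lin_sc[OF T] vf_sc)
  qed
  define K where "K = L' \<inter> sphere 0 1"
  have cK: "compact K" unfolding K_def
    by (intro closed_Int_compact closed_subspace sub compact_sphere)
  have X0: "vf x0 \<noteq> 0"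
  proof
    assume "vf x0 = 0"
    then have "x0 = (\<lambda>_. 0)" by (metis fv_vf zero_index)
    then show False using x0 by simp
  qed
  have "(1 / norm (vf x0)) *\<^sub>R vf x0 \<in> K"
    using X0 sub x0 unfolding K_def L'_def by (auto intro: subspace_scale)
  then have nK: "K \<noteq> {}" by auto
  have "continuous_on K (\<lambda>X. X \<bullet> T' X)"
    by (intro continuous_on_inner continuous_on_id linear_continuous_on
        linear_conv_bounded_linear[THEN iffD1] linT')
  from continuous_attains_sup[OF cK nK this]
  obtain Z where Z: "Z \<in> K" and mx: "\<And>Y. Y \<in> K \<Longrightarrow> Y \<bullet> T' Y \<le> Z \<bullet> T' Z" by blast
  obtain z where z: "z \<in> L" "Z = vf z" using Z unfolding K_def L'_def by auto
  have gz: "Z \<bullet> T' Z = ip z (T z)" unfolding T'_def z(2) by (simp add: inner_vf)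
  have "ip z z = 1" using Z z unfolding K_def by (simp add: inner_vf[symmetric] dot_square_norm)
  moreover have "ip x (T x) \<le> ip z (T z) * ip x x" if xL: "x \<in> L" for x
  proof (cases "x = (\<lambda>_. 0)")
    case True
    then show ?thesis using lin_zero[OF T] by simp
  next
    case False
    have ipx: "ip x x > 0" using False ip_self_eq0[of x] ip_self_ge0[of x] by linarith
    define a where "a = 1 / sqrt (ip x x)"
    have a2: "a^2 * ip x x = 1" using ipx unfolding a_def by (simp add: power_divide)
    have "sc a x \<in> L" using L xL unfolding subsp_def by blast
    moreover have "norm (vf (sc a x)) = 1"
    proof -
      have "norm (vf (sc a x))^2 = 1"
        using a2 unfolding power2_norm_eq_inner inner_vf by (simp add: ip_sc_left ip_sc_right power2_eq_square algebra_simps)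
      then show ?thesis by (metis norm_ge_zero power2_eq_1_iff neg_0_le_iff_le zero_le_one linorder_not_le le_minus_one_simps(3) order.trans)
    qed
    ultimately have "vf (sc a x) \<in> K" unfolding K_def L'_def by auto
    from mx[OF this] have "vf (sc a x) \<bullet> T' (vf (sc a x)) \<le> ip z (T z)" unfolding gz .
    then have "ip (sc a x) (T (sc a x)) \<le> ip z (T z)"
      unfolding T'_def by (simp add: inner_vf)
    then have "a^2 * ip x (T x) \<le> ip z (T z)"
      by (simp add: lin_sc[OF T] ip_sc_left ip_sc_right power2_eq_square algebra_simps)
    then have "a^2 * ip x (T x) * ip x x \<le> ip z (T z) * ip x x"
      using ipx by (intro mult_right_mono) auto
    moreover have "a^2 * ip x (T x) * ip x x = ip x (T x)" using a2 by (simp add: algebra_simps)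
    ultimately show ?thesis by simp
  qed
  ultimately show ?thesis using z by blast
qed

lemma eig_finite:
  fixes T :: "('v::finite \<Rightarrow> real) \<Rightarrow> ('v \<Rightarrow> real)"
  assumes sym: "\<And>x y. ip (T x) y = ip x (T y)"
  shows "finite {\<mu>. \<exists>x. x \<noteq> (\<lambda>_. 0) \<and> T x = sc \<mu> x}"
proof -
  define EV where "EV = {\<mu>. \<exists>x. x \<noteq> (\<lambda>_. 0) \<and> T x = sc \<mu> x}"
  define e where "e \<mu> = (SOME x. x \<noteq> (\<lambda>_. 0) \<and> T x = sc \<mu> x)" for \<mu>
  have e: "e \<mu> \<noteq> (\<lambda>_. 0) \<and> T (e \<mu>) = sc \<mu> (e \<mu>)" if "\<mu> \<in> EV" for \<mu>
  proof -
    from that obtain x where "x \<noteq> (\<lambda>_. 0) \<and> T x = sc \<mu> x" unfolding EV_def by blast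
    then show ?thesis unfolding e_def by (rule someI[where P="\<lambda>x. x \<noteq> (\<lambda>_. 0) \<and> T x = sc \<mu> x"])
  qed
  have orth: "ip (e \<mu>) (e \<nu>) = 0" if "\<mu> \<in> EV" "\<nu> \<in> EV" "\<mu> \<noteq> \<nu>" for \<mu> \<nu>
  proof -
    have "\<mu> * ip (e \<mu>) (e \<nu>) = ip (T (e \<mu>)) (e \<nu>)" using e[OF that(1)] by (simp add: ip_sc_left)
    also have "\<dots> = ip (e \<mu>) (T (e \<nu>))" by (rule sym)
    also have "\<dots> = \<nu> * ip (e \<mu>) (e \<nu>)" using e[OF that(2)] by (simp add: ip_sc_right)
    finally show ?thesis using that(3) by simp
  qed
  have inje: "inj_on e EV"
  proof (rule inj_onI)
    fix \<mu> \<nu> assume a: "\<mu> \<in> EV" "\<nu> \<in> EV" "e \<mu> = e \<nu>"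
    show "\<mu> = \<nu>"
    proof (rule ccontr)
      assume "\<mu> \<noteq> \<nu>"
      then have "ip (e \<mu>) (e \<mu>) = 0" using orth[OF a(1,2)] a(3) by simp
      then show False using e[OF a(1)] ip_self_eq0[of "e \<mu>"] by simp
    qed
  qed
  define \<Phi> where "\<Phi> = vf ` e ` EV"
  have "pairwise orthogonal \<Phi>"
  proof (unfold pairwise_def, intro ballI impI)
    fix X Y assume "X \<in> \<Phi>" "Y \<in> \<Phi>" "X \<noteq> Y"
    then obtain \<mu> \<nu> where m: "\<mu> \<in> EV" "\<nu> \<in> EV" "X = vf (e \<mu>)" "Y = vf (e \<nu>)"
      unfolding \<Phi>_def by auto
    then have "\<mu> \<noteq> \<nu>" using \<open>X \<noteq> Y\<close> by auto
    then show "orthogonal X Y" unfolding orthogonal_def m(3,4) inner_vf using orth m(1,2) by blast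
  qed
  moreover have "0 \<notin> \<Phi>"
  proof
    assume "0 \<in> \<Phi>"
    then obtain \<mu> where "\<mu> \<in> EV" "vf (e \<mu>) = 0" unfolding \<Phi>_def by auto
    then have "ip (e \<mu>) (e \<mu>) = 0" using inner_vf[of "e \<mu>" "e \<mu>"] by simp
    then show False using e[OF \<open>\<mu> \<in> EV\<close>] ip_self_eq0[of "e \<mu>"] by simp
  qed
  ultimately have "independent \<Phi>" by (rule pairwise_orthogonal_independent)
  then have "finite \<Phi>" by (rule independent_imp_finite)
  then have "finite (e ` EV)" unfolding \<Phi>_def
    using finite_imageD[of vf "e ` EV"] inj_on_subset[OF vf_inj, of "e ` EV"] by blast
  then have "finite EV" using inje by (rule finite_imageD)
  then show ?thesis unfolding EV_def .
qed



locale gsetup =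
  fixes E :: "'v::finite \<Rightarrow> 'v \<Rightarrow> bool" and k :: nat and p :: "'v \<Rightarrow> nat" and S :: "nat \<Rightarrow> nat \<Rightarrow> nat"
  assumes symE: "\<And>u v. E u v \<Longrightarrow> E v u" and irr: "\<And>v. \<not> E v v"
    and reg: "S_regular E k p S"
begin

abbreviation "A \<equiv> adj_op E"

lemma pk: "p v < k" using reg unfolding S_regular_def by blast
lemma cell_ne: "i < k \<Longrightarrow> cell p i \<noteq> {}" using reg unfolding S_regular_def by blast
lemma regS: "j < k \<Longrightarrow> card {w. E v w \<and> p w = j} = S (p v) j" using reg unfolding S_regular_def by blast
lemma kpos: "k > 0" using pk[of undefined] by simp

definition ncell :: "nat \<Rightarrow> real" where "ncell i = real (card (cell p i))"
lemma ncell_pos: "i < k \<Longrightarrow> ncell i > 0"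
  using cell_ne unfolding ncell_def by (simp add: card_gt_0_iff)

lemma adj_alt: "A x v = (\<Sum>w\<in>UNIV. if E v w then x w else 0)"
  unfolding adj_op_def by (simp add: sum.inter_filter[symmetric])

lemma lin_A: "lin A"
  unfolding lin_def adj_op_def sc_def by (auto simp: fun_eq_iff sum.distrib sum_distrib_left)

lemma sym_A: "ip (A x) y = ip x (A y)"
proof -
  have "ip (A x) y = (\<Sum>v\<in>UNIV. \<Sum>w\<in>UNIV. if E v w then x w * y v else 0)"
    unfolding ip_def adj_alt sum_distrib_right by (intro sum.cong refl) simp
  also have "\<dots> = (\<Sum>w\<in>UNIV. \<Sum>v\<in>UNIV. if E v w then x w * y v else 0)" by (rule sum.swap)
  also have "\<dots> = (\<Sum>w\<in>UNIV. \<Sum>v\<in>UNIV. if E w v then x w * y v else 0)"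
    using symE by (intro sum.cong refl) (metis)
  also have "\<dots> = ip x (A y)"
    unfolding ip_def adj_alt sum_distrib_left by (intro sum.cong refl) simp
  finally show ?thesis .
qed

lemma sum_cells: "(\<Sum>v\<in>UNIV. f v) = (\<Sum>i<k. \<Sum>v\<in>cell p i. f v)"
proof -
  have "(\<Sum>i<k. \<Sum>v\<in>{x. x \<in> UNIV \<and> p x = i}. f v) = (\<Sum>v\<in>UNIV. f v)"
    by (rule sum.group) (auto simp: pk)
  then show ?thesis unfolding cell_def by simp
qed

definition cc :: "('v \<Rightarrow> real) \<Rightarrow> bool" where
  "cc w \<longleftrightarrow> (\<forall>u v. p u = p v \<longrightarrow> w u = w v)"

definition rep :: "nat \<Rightarrow> 'v" where "rep i = (SOME v. p v = i)"
lemma rep: "i < k \<Longrightarrow> p (rep i) = i"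
  using cell_ne[of i] unfolding rep_def cell_def by (auto intro: someI)

lemma A_cc_formula:
  assumes "cc w"
  shows "A w v = (\<Sum>j<k. real (S (p v) j) * w (rep j))"
proof -
  have "A w v = (\<Sum>j<k. \<Sum>u\<in>{u. u \<in> {u. E v u} \<and> p u = j}. w u)"
    unfolding adj_op_def by (rule sum.group[symmetric]) (auto simp: pk)
  also have "\<dots> = (\<Sum>j<k. \<Sum>u\<in>{u. E v u \<and> p u = j}. w (rep j))"
    using assms rep unfolding cc_def by (intro sum.cong refl) auto
  also have "\<dots> = (\<Sum>j<k. real (S (p v) j) * w (rep j))"
    using regS by (intro sum.cong refl) auto
  finally show ?thesis .
qed

lemma A_cc: "cc w \<Longrightarrow> cc (A w)"
  unfolding cc_def[of "A w"] using A_cc_formula by simp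

abbreviation perp where "perp x \<equiv> perp_cells k p x"

definition ind :: "nat \<Rightarrow> 'v \<Rightarrow> real" where "ind i v = (if p v = i then 1 else 0)"

lemma ip_ind: "ip (ind i) x = (\<Sum>v\<in>cell p i. x v)"
proof -
  have "ip (ind i) x = (\<Sum>v\<in>UNIV. if p v = i then x v else 0)"
    unfolding ip_def ind_def by (intro sum.cong) auto
  also have "\<dots> = (\<Sum>v\<in>{v\<in>UNIV. p v = i}. x v)" by (rule sum.inter_filter[symmetric]) simp
  finally show ?thesis unfolding cell_def by simp
qed

lemma cc_ind: "cc (ind i)" unfolding cc_def ind_def by auto

lemma ip_cc_perp:
  assumes "cc w" "perp b" shows "ip w b = 0"
proof -
  have "ip w b = (\<Sum>i<k. \<Sum>v\<in>cell p i. w v * b v)" unfolding ip_def by (rule sum_cells)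
  also have "\<dots> = (\<Sum>i<k. w (rep i) * (\<Sum>v\<in>cell p i. b v))"
  proof (intro sum.cong refl)
    fix i assume "i \<in> {..<k}"
    then have "\<And>v. v \<in> cell p i \<Longrightarrow> w v = w (rep i)" using assms(1) rep unfolding cc_def cell_def by auto
    then show "(\<Sum>v\<in>cell p i. w v * b v) = w (rep i) * (\<Sum>v\<in>cell p i. b v)"
      by (simp add: sum_distrib_left)
  qed
  also have "\<dots> = 0" using assms(2) unfolding perp_cells_def by simp
  finally show ?thesis .
qed

lemma A_perp: assumes "perp b" shows "perp (A b)"
  unfolding perp_cells_def
proof safe
  fix i assume "i < k"
  have "(\<Sum>v\<in>cell p i. A b v) = ip (ind i) (A b)" by (simp add: ip_ind)
  also have "\<dots> = ip (A (ind i)) b" by (simp add: sym_A)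
  also have "\<dots> = 0" by (rule ip_cc_perp[OF A_cc[OF cc_ind] assms])
  finally show "(\<Sum>v\<in>cell p i. A b v) = 0" .
qed

lemma subsp_perp: "subsp {x. perp x}"
  unfolding subsp_def perp_cells_def sc_def by (auto simp: sum.distrib sum_distrib_left[symmetric])

lemma subsp_UNIV: "subsp UNIV" unfolding subsp_def by auto

lemma cc_perp_0: "cc w \<Longrightarrow> perp w \<Longrightarrow> w = (\<lambda>_. 0)"
  using ip_cc_perp ip_self_eq0 by blast

definition EVs where "EVs = {\<mu>. \<exists>x. x \<noteq> (\<lambda>_. 0) \<and> A x = sc \<mu> x}"
lemma EVs_finite: "finite EVs" unfolding EVs_def by (rule eig_finite[OF sym_A])

lemma bulk_sub: "bulk_eigenvalues E k p \<subseteq> EVs"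
  unfolding bulk_eigenvalues_def EVs_def sc_def by auto

lemma mat_sub: "matrix_eigenvalues k S \<subseteq> EVs"
proof
  fix \<mu> assume "\<mu> \<in> matrix_eigenvalues k S"
  then obtain y where y: "\<exists>i<k. y i \<noteq> 0" "\<And>i. i < k \<Longrightarrow> (\<Sum>j<k. real (S i j) * y j) = \<mu> * y i"
    unfolding matrix_eigenvalues_def by blast
  define x where "x v = y (p v)" for v
  have ccx: "cc x" unfolding cc_def x_def by auto
  obtain i where i: "i < k" "y i \<noteq> 0" using y(1) by blast
  have "x (rep i) \<noteq> 0" using i rep unfolding x_def by simp
  then have "x \<noteq> (\<lambda>_. 0)" by auto
  moreover have "A x = sc \<mu> x"
  proof
    fix v
    have "A x v = (\<Sum>j<k. real (S (p v) j) * y j)"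
      unfolding A_cc_formula[OF ccx] x_def using rep by (intro sum.cong refl) auto
    also have "\<dots> = \<mu> * x v" using y(2)[OF pk[of v]] unfolding x_def by simp
    finally show "A x v = sc \<mu> x v" by (simp add: sc_def)
  qed
  ultimately show "\<mu> \<in> EVs" unfolding EVs_def by blast
qed

lemma bulk_finite: "finite (bulk_eigenvalues E k p)"
  using finite_subset[OF bulk_sub EVs_finite] .
lemma mat_finite: "finite (matrix_eigenvalues k S)"
  using finite_subset[OF mat_sub EVs_finite] .


definition P :: "('v \<Rightarrow> real) \<Rightarrow> 'v \<Rightarrow> real" where
  "P x v = (\<Sum>u\<in>cell p (p v). x u) / ncell (p v)"

lemma cc_P: "cc (P x)" unfolding cc_def P_def by auto

lemma perp_diff_P: "perp (\<lambda>v. x v - P x v)"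
  unfolding perp_cells_def
proof safe
  fix i assume i: "i < k"
  have "(\<Sum>v\<in>cell p i. x v - P x v) = (\<Sum>v\<in>cell p i. x v) - (\<Sum>v\<in>cell p i. (\<Sum>u\<in>cell p i. x u) / ncell i)"
    unfolding sum_subtractf by (intro arg_cong2[where f="(-)"] sum.cong refl) (auto simp: P_def cell_def)
  also have "\<dots> = 0" using ncell_pos[OF i] by (simp add: ncell_def)
  finally show "(\<Sum>v\<in>cell p i. x v - P x v) = 0" .
qed

lemma perp_lin: "perp x \<Longrightarrow> perp y \<Longrightarrow> perp (\<lambda>v. a * x v + c * y v)"
  unfolding perp_cells_def
proof safe
  fix i assume "\<forall>i<k. sum x (cell p i) = 0" "\<forall>i<k. sum y (cell p i) = 0" "i < k"
  then have "sum x (cell p i) = 0" "sum y (cell p i) = 0" by auto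
  then show "(\<Sum>v\<in>cell p i. a * x v + c * y v) = 0"
    by (simp only: sum.distrib sum_distrib_left[symmetric])
qed

lemma cc_lin: "cc x \<Longrightarrow> cc y \<Longrightarrow> cc (\<lambda>v. a * x v + c * y v)"
  unfolding cc_def
proof (intro allI impI)
  fix u v assume "\<forall>u v. p u = p v \<longrightarrow> x u = x v" "\<forall>u v. p u = p v \<longrightarrow> y u = y v" "p u = p v"
  then have "x u = x v" "y u = y v" by blast+
  then show "a * x u + c * y u = a * x v + c * y v" by simp
qed

lemma absA: "\<bar>ip x (A x)\<bar> \<le> ip (\<lambda>v. \<bar>x v\<bar>) (A (\<lambda>v. \<bar>x v\<bar>))"
proof -
  have "\<bar>ip x (A x)\<bar> \<le> (\<Sum>v\<in>UNIV. \<bar>x v * A x v\<bar>)" unfolding ip_def by (rule sum_abs)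
  also have "\<dots> \<le> ip (\<lambda>v. \<bar>x v\<bar>) (A (\<lambda>v. \<bar>x v\<bar>))"
    unfolding ip_def
  proof (rule sum_mono)
    fix v
    have "\<bar>A x v\<bar> \<le> A (\<lambda>v. \<bar>x v\<bar>) v" unfolding adj_op_def by (rule sum_abs)
    then show "\<bar>x v * A x v\<bar> \<le> \<bar>x v\<bar> * A (\<lambda>v. \<bar>x v\<bar>) v"
      unfolding abs_mult by (intro mult_left_mono) auto
  qed
  finally show ?thesis .
qed

lemma ip_abs: "ip (\<lambda>v. \<bar>x v\<bar>) (\<lambda>v. \<bar>x v\<bar>) = ip x x"
  unfolding ip_def by (intro sum.cong refl) (simp add: abs_mult_self_eq)

lemma global_q: "\<exists>q. (\<forall>x. ip x (A x) \<le> q * ip x x) \<and> q \<in> matrix_eigenvalues k S"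
proof -
  have "(\<lambda>_. 1::real) \<noteq> (\<lambda>_. 0)" by (simp add: fun_eq_iff)
  from exists_max[OF lin_A subsp_UNIV UNIV_I this]
  obtain z0 where z0: "ip z0 z0 = 1" "\<And>x. ip x (A x) \<le> ip z0 (A z0) * ip x x" by blast
  define q where "q = ip z0 (A z0)"
  define z where "z v = \<bar>z0 v\<bar>" for v
  have zz: "ip z z = 1" using z0(1) ip_abs unfolding z_def by metis
  have "q \<le> ip z (A z)" using absA[of z0] unfolding q_def z_def by simp
  moreover have "ip z (A z) \<le> q * ip z z" using z0(2) unfolding q_def by blast
  ultimately have eq: "ip z (A z) = q * ip z z" using zz by simp
  have mxq: "\<And>x. x \<in> UNIV \<Longrightarrow> ip x (A x) \<le> q * ip x x" using z0(2) unfolding q_def by blast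
  have inv: "\<And>x. x \<in> UNIV \<Longrightarrow> A x \<in> UNIV" by simp
  have Az: "A z = sc q z"
    by (rule variational[OF lin_A sym_A subsp_UNIV inv UNIV_I mxq eq])
  define w where "w = P z"
  define b where "b v = z v - w v" for v
  have ccw: "cc w" unfolding w_def by (rule cc_P)
  have pb: "perp b" unfolding b_def w_def by (rule perp_diff_P)
  have zwb: "z = w + b" unfolding b_def by (simp add: fun_eq_iff)
  have "A z = A w + A b" unfolding zwb by (rule lin_add[OF lin_A])
  then have eqv: "A w v + A b v = q * w v + q * b v" for v
    using Az zwb by (auto simp: fun_eq_iff sc_def algebra_simps)
  define d where "d v = 1 * A w v + (-q) * w v" for v
  have ccd: "cc d" unfolding d_def by (intro cc_lin A_cc ccw)
  have dd: "d = (\<lambda>v. q * b v + (-1) * A b v)" using eqv unfolding d_def by (auto simp: fun_eq_iff algebra_simps)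
  have "perp (\<lambda>v. q * b v + (-1) * A b v)" by (rule perp_lin[OF pb A_perp[OF pb]])
  then have "perp d" using dd by simp
  with ccd have "d = (\<lambda>_. 0)" by (rule cc_perp_0)
  then have "d v = 0" for v by simp
  then have "1 * A w v + (-q) * w v = 0" for v unfolding d_def .
  then have Aw: "A w v = q * w v" for v by (simp add: algebra_simps)
  have "z \<noteq> (\<lambda>_. 0)" using zz by auto
  then obtain v0 where "z v0 \<noteq> 0" by auto
  then have zv0: "z v0 > 0" unfolding z_def by simp
  have "w v0 > 0"
  proof -
    have "z v0 \<le> (\<Sum>u\<in>cell p (p v0). z u)"
      by (rule member_le_sum) (auto simp: z_def cell_def)
    then have "(\<Sum>u\<in>cell p (p v0). z u) > 0" using zv0 by linarith
    then show ?thesis unfolding w_def P_def using ncell_pos[OF pk[of v0]] by (simp only: divide_pos_pos)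
  qed
  define i where "i = p v0"
  have i: "i < k" unfolding i_def by (rule pk)
  have "p (rep i) = p v0 \<longrightarrow> w (rep i) = w v0" using ccw unfolding cc_def by blast
  then have wr: "w (rep i) = w v0" using rep[OF i] unfolding i_def by simp
  have "q \<in> matrix_eigenvalues k S"
    unfolding matrix_eigenvalues_def
  proof (intro CollectI exI[of _ "\<lambda>j. w (rep j)"] conjI allI impI)
    show "\<exists>i<k. w (rep i) \<noteq> 0" using i wr \<open>w v0 > 0\<close> by auto
  next
    fix j assume j: "j < k"
    have "(\<Sum>l<k. real (S j l) * w (rep l)) = A w (rep j)"
      using A_cc_formula[OF ccw, of "rep j"] rep[OF j] by simp
    then show "(\<Sum>l<k. real (S j l) * w (rep l)) = q * w (rep j)" using Aw by simp
  qed
  then show ?thesis using z0(2) q_def by blast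
qed


lemma ip_sc_self: "ip x (sc \<mu> x) = \<mu> * ip x x" by (rule ip_sc_right)

lemma bulk_facts:
  assumes nk: "card (UNIV :: 'v set) > k"
  shows "bulk_eigenvalues E k p \<noteq> {}" "\<And>b. perp b \<Longrightarrow> ip b (A b) \<le> lambda_B E k p * ip b b"
proof -
  have "\<not> inj p"
  proof
    assume "inj p"
    then have "card (UNIV :: 'v set) = card (p ` UNIV)" by (simp add: card_image)
    also have "\<dots> \<le> card {..<k}" by (rule card_mono) (auto simp: pk)
    finally show False using nk by simp
  qed
  then obtain u v where uv: "u \<noteq> v" "p u = p v" unfolding inj_def by blast
  define x0 where "x0 w = (if w = u then 1 else 0) - (if w = v then (1::real) else 0)" for w
  have "perp x0" unfolding perp_cells_def
  proof safe
    fix i assume "i < k"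
    have "(\<Sum>w\<in>cell p i. x0 w) = (\<Sum>w\<in>cell p i. if w = u then 1 else 0) - (\<Sum>w\<in>cell p i. if w = v then (1::real) else 0)"
      unfolding x0_def by (rule sum_subtractf)
    also have "\<dots> = 0" using uv by (simp add: cell_def)
    finally show "(\<Sum>w\<in>cell p i. x0 w) = 0" .
  qed
  moreover have "x0 \<noteq> (\<lambda>_. 0)" using uv unfolding x0_def by (auto simp: fun_eq_iff)
  ultimately obtain z where z: "z \<in> {x. perp x}" "ip z z = 1"
    "\<And>x. x \<in> {x. perp x} \<Longrightarrow> ip x (A x) \<le> ip z (A z) * ip x x"
    using exists_max[OF lin_A subsp_perp, of x0] by blast
  define \<mu> where "\<mu> = ip z (A z)"
  have mx: "\<And>x. x \<in> {x. perp x} \<Longrightarrow> ip x (A x) \<le> \<mu> * ip x x" using z(3) unfolding \<mu>_def by blast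
  have inv: "\<And>x. x \<in> {x. perp x} \<Longrightarrow> A x \<in> {x. perp x}" using A_perp by blast
  have eq: "ip z (A z) = \<mu> * ip z z" using z(2) unfolding \<mu>_def by simp
  have Az: "A z = sc \<mu> z" by (rule variational[OF lin_A sym_A subsp_perp inv z(1) mx eq])
  have "z \<noteq> (\<lambda>_. 0)" using z(2) by auto
  then have mb: "\<mu> \<in> bulk_eigenvalues E k p"
    unfolding bulk_eigenvalues_def using z(1) Az by (auto simp: sc_def)
  then show "bulk_eigenvalues E k p \<noteq> {}" by blast
  have "\<bar>\<mu>\<bar> \<le> lambda_B E k p" unfolding lambda_B_def
    using mb bulk_finite by (intro Max_ge) auto
  then have mB: "\<mu> \<le> lambda_B E k p" by linarith
  fix b assume "perp b"
  then have "ip b (A b) \<le> \<mu> * ip b b" using mx by blast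
  also have "\<dots> \<le> lambda_B E k p * ip b b" using mB ip_self_ge0[of b] by (rule mult_right_mono)
  finally show "ip b (A b) \<le> lambda_B E k p * ip b b" .
qed

lemma lamS_bound: "ip x (A x) \<le> lambda_S k S * ip x x"
proof -
  obtain q where q: "\<And>x. ip x (A x) \<le> q * ip x x" "q \<in> matrix_eigenvalues k S" using global_q by blast
  have "q \<le> lambda_S k S" unfolding lambda_S_def using q(2) mat_finite by (intro Max_ge)
  then have "q * ip x x \<le> lambda_S k S * ip x x" using ip_self_ge0[of x] by (rule mult_right_mono)
  then show ?thesis using q(1)[of x] by linarith
qed

lemma lamB_le_lamS:
  assumes nk: "card (UNIV :: 'v set) > k"
  shows "lambda_B E k p \<le> lambda_S k S"
  unfolding lambda_B_def
proof (rule Max.boundedI)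
  show "finite (abs ` bulk_eigenvalues E k p)" using bulk_finite by simp
  show "abs ` bulk_eigenvalues E k p \<noteq> {}" using bulk_facts(1)[OF nk] by simp
  fix a assume "a \<in> abs ` bulk_eigenvalues E k p"
  then obtain \<mu> x where a: "a = \<bar>\<mu>\<bar>" "x \<noteq> (\<lambda>_. 0)" "A x = (\<lambda>v. \<mu> * x v)"
    unfolding bulk_eigenvalues_def by blast
  have "ip x (A x) = \<mu> * ip x x" using a(3) ip_sc_self[of x \<mu>] unfolding sc_def by simp
  then have "\<bar>\<mu>\<bar> * ip x x = \<bar>ip x (A x)\<bar>" using ip_self_ge0[of x] by (simp add: abs_mult)
  also have "\<dots> \<le> ip (\<lambda>v. \<bar>x v\<bar>) (A (\<lambda>v. \<bar>x v\<bar>))" by (rule absA)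
  also have "\<dots> \<le> lambda_S k S * ip x x" using lamS_bound ip_abs by metis
  finally have "\<bar>\<mu>\<bar> * ip x x \<le> lambda_S k S * ip x x" .
  moreover have "ip x x > 0" using a(2) ip_self_eq0[of x] ip_self_ge0[of x] by linarith
  ultimately show "a \<le> lambda_S k S" unfolding a(1) by simp
qed

lemma decomp:
  "ip x (A x) = ip (P x) (A (P x)) + ip (\<lambda>v. x v - P x v) (A (\<lambda>v. x v - P x v))"
  "ip x x = ip (P x) (P x) + ip (\<lambda>v. x v - P x v) (\<lambda>v. x v - P x v)"
proof -
  define w where "w = P x"
  define b where "b = (\<lambda>v. x v - P x v)"
  have xwb: "x = w + b" unfolding w_def b_def by (simp add: fun_eq_iff)
  have pb: "perp b" unfolding b_def by (rule perp_diff_P)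
  have ccw: "cc w" unfolding w_def by (rule cc_P)
  have 1: "ip w (A b) = 0" by (rule ip_cc_perp[OF ccw A_perp[OF pb]])
  have 2: "ip b (A w) = 0" using ip_cc_perp[OF A_cc[OF ccw] pb] by (simp add: ip_comm)
  have 3: "ip w b = 0" by (rule ip_cc_perp[OF ccw pb])
  have "ip x (A x) = ip w (A w) + ip b (A b)"
    unfolding xwb lin_add[OF lin_A] ip_add_left ip_add_right using 1 2 by simp
  then show "ip x (A x) = ip (P x) (A (P x)) + ip (\<lambda>v. x v - P x v) (A (\<lambda>v. x v - P x v))"
    unfolding w_def b_def .
  have "ip x x = ip w w + ip b b"
    unfolding xwb ip_add_left ip_add_right using 3 by (simp add: ip_comm[of b w])
  then show "ip x x = ip (P x) (P x) + ip (\<lambda>v. x v - P x v) (\<lambda>v. x v - P x v)"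
    unfolding w_def b_def .
qed


definition cmin :: "'v set \<Rightarrow> real" where
  "cmin C = (MIN i\<in>{..<k}. real (card (C \<inter> cell p i)) / real (card (cell p i)))"

lemma cmin_le: "i < k \<Longrightarrow> cmin C \<le> real (card (C \<inter> cell p i)) / ncell i"
  unfolding cmin_def ncell_def by (intro Min_le) auto

lemma proj_bound:
  assumes x0: "\<And>v. v \<in> C \<Longrightarrow> x v = 0"
  shows "ip (P x) (P x) \<le> (1 - cmin C) * ip x x"
proof -
  have "ip (P x) (P x) = (\<Sum>i<k. \<Sum>v\<in>cell p i. P x v * P x v)" unfolding ip_def by (rule sum_cells)
  also have "\<dots> \<le> (\<Sum>i<k. (1 - cmin C) * (\<Sum>v\<in>cell p i. x v * x v))"
  proof (rule sum_mono)
    fix i assume "i \<in> {..<k}"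
    then have i: "i < k" by simp
    define s where "s = (\<Sum>u\<in>cell p i. x u)"
    define Q where "Q = (\<Sum>v\<in>cell p i. x v * x v)"
    define D where "D = cell p i - C"
    have n: "ncell i > 0" by (rule ncell_pos[OF i])
    have "(\<Sum>v\<in>cell p i. P x v * P x v) = (\<Sum>v\<in>cell p i. (s / ncell i) * (s / ncell i))"
      by (intro sum.cong refl) (auto simp: P_def cell_def s_def)
    also have "\<dots> = s^2 / ncell i" using n by (simp add: ncell_def power2_eq_square)
    finally have e1: "(\<Sum>v\<in>cell p i. P x v * P x v) = s^2 / ncell i" .
    have sD: "s = (\<Sum>v\<in>D. x v)" unfolding s_def D_def
      by (rule sum.mono_neutral_right) (auto simp: x0)
    have QD: "Q = (\<Sum>v\<in>D. (x v)^2)" unfolding Q_def D_def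
      by (subst sum.mono_neutral_right[where S="cell p i - C"]) (auto simp: x0 power2_eq_square)
    have cs: "s^2 \<le> Q * real (card D)"
      using Cauchy_Schwarz_ineq_sum[of x "\<lambda>_. 1" D] unfolding sD QD by simp
    have cD: "real (card D) = ncell i - real (card (C \<inter> cell p i))"
    proof -
      have "card D = card (cell p i) - card (cell p i \<inter> C)" unfolding D_def
        by (rule card_Diff_subset_Int) simp
      moreover have "card (cell p i \<inter> C) \<le> card (cell p i)" by (rule card_mono) auto
      ultimately show ?thesis unfolding ncell_def by (simp add: Int_commute of_nat_diff)
    qed
    have Q0: "Q \<ge> 0" unfolding Q_def by (simp add: sum_nonneg)
    have "s^2 / ncell i \<le> Q * real (card D) / ncell i" using cs n by (simp add: divide_right_mono)
    also have "\<dots> = Q * (1 - real (card (C \<inter> cell p i)) / ncell i)" using n unfolding cD by (simp add: field_simps)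
    also have "\<dots> \<le> Q * (1 - cmin C)" using cmin_le[OF i, of C] Q0 by (intro mult_left_mono) auto
    finally show "(\<Sum>v\<in>cell p i. P x v * P x v) \<le> (1 - cmin C) * (\<Sum>v\<in>cell p i. x v * x v)"
      unfolding e1 Q_def by (simp add: mult.commute)
  qed
  also have "\<dots> = (1 - cmin C) * ip x x" unfolding ip_def sum_cells[of "\<lambda>v. x v * x v"] by (simp add: sum_distrib_left)
  finally show ?thesis .
qed

lemma rayleigh_U:
  assumes nk: "card (UNIV :: 'v set) > k" and x0: "\<And>v. v \<in> C \<Longrightarrow> x v = 0"
  shows "ip x (A x) \<le> (lambda_S k S * (1 - cmin C) + lambda_B E k p * cmin C) * ip x x"
proof -
  define w where "w = P x"
  define b where "b = (\<lambda>v. x v - P x v)"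
  have d1: "ip x (A x) = ip w (A w) + ip b (A b)" and d2: "ip x x = ip w w + ip b b"
    unfolding w_def b_def by (rule decomp)+
  have "ip w (A w) \<le> lambda_S k S * ip w w" by (rule lamS_bound)
  moreover have "ip b (A b) \<le> lambda_B E k p * ip b b" unfolding b_def by (rule bulk_facts(2)[OF nk perp_diff_P])
  ultimately have "ip x (A x) \<le> lambda_B E k p * ip x x + (lambda_S k S - lambda_B E k p) * ip w w"
    unfolding d1 d2 by (simp add: algebra_simps)
  also have "(lambda_S k S - lambda_B E k p) * ip w w \<le> (lambda_S k S - lambda_B E k p) * ((1 - cmin C) * ip x x)"
    using lamB_le_lamS[OF nk] proj_bound[OF x0] unfolding w_def by (intro mult_left_mono) auto
  finally show ?thesis by (simp add: algebra_simps)
qed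

lemma rayleigh_U_abs:
  assumes nk: "card (UNIV :: 'v set) > k" and x0: "\<And>v. v \<in> C \<Longrightarrow> x v = 0"
  shows "\<bar>ip x (A x)\<bar> \<le> (lambda_S k S * (1 - cmin C) + lambda_B E k p * cmin C) * ip x x"
proof -
  have "\<bar>ip x (A x)\<bar> \<le> ip (\<lambda>v. \<bar>x v\<bar>) (A (\<lambda>v. \<bar>x v\<bar>))" by (rule absA)
  also have "\<dots> \<le> (lambda_S k S * (1 - cmin C) + lambda_B E k p * cmin C) * ip (\<lambda>v. \<bar>x v\<bar>) (\<lambda>v. \<bar>x v\<bar>)"
    by (rule rayleigh_U[OF nk]) (simp add: x0)
  finally show ?thesis unfolding ip_abs .
qed

end


definition restr :: "'v set \<Rightarrow> ('v \<Rightarrow> real) \<Rightarrow> 'v \<Rightarrow> real" where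
  "restr C x v = (if v \<in> C then 0 else x v)"

definition oneU :: "'v set \<Rightarrow> 'v \<Rightarrow> real" where
  "oneU C v = (if v \<in> C then 0 else 1)"

lemma restr_lin: "lin T \<Longrightarrow> lin (\<lambda>x. restr C (T (restr C x)))"
proof -
  assume T: "lin T"
  have a: "restr C (x + y) = restr C x + restr C y" for x y by (auto simp: restr_def fun_eq_iff)
  have b: "restr C (sc c x) = sc c (restr C x)" for c x by (auto simp: restr_def sc_def fun_eq_iff)
  show ?thesis unfolding lin_def by (simp add: a b lin_add[OF T] lin_sc[OF T])
qed

lemma ip_restr: "ip (restr C x) y = ip x (restr C y)"
  unfolding ip_def restr_def by (intro sum.cong refl) auto

lemma ip_restr_self: "ip (restr C x) (restr C x) \<le> ip x x"
  unfolding ip_def restr_def by (intro sum_mono) auto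

lemma restr_sym:
  assumes "\<And>x y. ip (T x) y = ip x (T y)"
  shows "ip (restr C (T (restr C x))) y = ip x (restr C (T (restr C y)))"
  using assms[of "restr C x" "restr C y"] by (simp add: ip_restr)

lemma norm_from_quad:
  fixes T :: "('v::finite \<Rightarrow> real) \<Rightarrow> 'v \<Rightarrow> real"
  assumes T: "lin T" and sym: "\<And>x y. ip (T x) y = ip x (T y)"
    and Q: "\<And>x. \<bar>ip x (T x)\<bar> \<le> R * ip x x" and R: "R \<ge> 0"
  shows "ip (T x) (T x) \<le> R^2 * ip x x"
proof -
  define a where "a = ip x x"
  define \<beta> where "\<beta> = ip (T x) (T x)"
  have key: "2 * t * \<beta> \<le> R * (t^2 * a + \<beta>)" for t
  proof -
    define u where "u = sc t x"
    define v where "v = T x"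
    define m where "m = sc (-1) v"
    have q1: "ip (u + v) (T (u + v)) = ip u (T u) + 2 * ip u (T v) + ip v (T v)"
      using sym[of u v] by (simp add: lin_add[OF T] ip_add_left ip_add_right ip_comm[of "T u" v])
    have q2: "ip (u + m) (T (u + m)) = ip u (T u) - 2 * ip u (T v) + ip v (T v)"
      using sym[of u v] unfolding m_def
      by (simp add: lin_add[OF T] lin_sc[OF T] ip_add_left ip_add_right ip_sc_left ip_sc_right ip_comm[of "T u" v])
    have n1: "ip (u + v) (u + v) + ip (u + m) (u + m) = 2 * ip u u + 2 * ip v v"
      unfolding m_def by (simp add: ip_add_left ip_add_right ip_sc_left ip_sc_right ip_comm[of u v])
    have "ip (u + v) (T (u + v)) \<le> R * ip (u + v) (u + v)" using Q[of "u + v"] by linarith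
    moreover have "- ip (u + m) (T (u + m)) \<le> R * ip (u + m) (u + m)" using Q[of "u + m"] by linarith
    moreover have "R * ip (u + v) (u + v) + R * ip (u + m) (u + m) = R * (2 * ip u u + 2 * ip v v)"
      using n1 by (metis distrib_left)
    ultimately have "4 * ip u (T v) \<le> R * (2 * ip u u + 2 * ip v v)"
      using q1 q2 by linarith
    moreover have "ip u (T v) = t * \<beta>" unfolding u_def v_def \<beta>_def by (simp add: ip_sc_left sym)
    moreover have "ip u u = t^2 * a" unfolding u_def a_def by (simp add: ip_sc_left ip_sc_right power2_eq_square)
    moreover have "ip v v = \<beta>" unfolding v_def \<beta>_def ..
    ultimately show ?thesis by (simp add: algebra_simps)
  qed
  have a0: "a \<ge> 0" and b0: "\<beta> \<ge> 0" unfolding a_def \<beta>_def by (rule ip_self_ge0)+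
  show ?thesis
  proof (cases "\<beta> = 0")
    case True then show ?thesis using a0 unfolding a_def \<beta>_def by simp
  next
    case False
    then have bp: "\<beta> > 0" using b0 by simp
    have Rp: "R > 0"
    proof (rule ccontr)
      assume "\<not> R > 0"
      then have "R = 0" using R by simp
      then show False using key[of 1] bp by simp
    qed
    have ap: "a > 0"
    proof (rule ccontr)
      assume "\<not> a > 0"
      then have "a = 0" using a0 by simp
      then have "x = (\<lambda>_. 0)" unfolding a_def using ip_self_eq0 by blast
      then have "T x = (\<lambda>_. 0)" using lin_zero[OF T] by simp
      then show False using bp unfolding \<beta>_def by simp
    qed
    define t where "t = \<beta> / (R * a)"
    have "2 * t * \<beta> \<le> R * (t^2 * a + \<beta>)" by (rule key)
    then have "2 * \<beta>^2 / (R * a) \<le> \<beta>^2 / (R * a) + R * \<beta>"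
      unfolding t_def using Rp ap by (simp add: field_simps power2_eq_square)
    then have "\<beta>^2 / (R * a) \<le> R * \<beta>" by simp
    then have "\<beta>^2 \<le> R * \<beta> * (R * a)" using Rp ap by (simp add: divide_le_eq)
    then have "\<beta> * \<beta> \<le> \<beta> * (R^2 * a)" by (simp add: power2_eq_square algebra_simps)
    then have "\<beta> \<le> R^2 * a" using bp by simp
    then show ?thesis unfolding a_def \<beta>_def .
  qed
qed

lemma ip_funpow:
  assumes sym: "\<And>x y. ip (T x) y = ip x (T y)"
  shows "ip x ((T^^(a + b)) y) = ip ((T^^a) x) ((T^^b) y)"
proof (induction a arbitrary: b)
  case 0 then show ?case by simp
next
  case (Suc a)
  have "ip x ((T^^(Suc a + b)) y) = ip x ((T^^(a + Suc b)) y)" by simp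
  also have "\<dots> = ip ((T^^a) x) ((T^^(Suc b)) y)" by (rule Suc.IH)
  also have "\<dots> = ip ((T^^(Suc a)) x) ((T^^b) y)" by (simp add: sym)
  finally show ?case .
qed

lemma norm_iter:
  fixes T :: "('v::finite \<Rightarrow> real) \<Rightarrow> 'v \<Rightarrow> real"
  assumes "\<And>x. ip (T x) (T x) \<le> R2 * ip x x" "R2 \<ge> 0"
  shows "ip ((T^^j) x) ((T^^j) x) \<le> R2^j * ip x x"
proof (induction j)
  case 0 then show ?case by simp
next
  case (Suc j)
  have "ip ((T^^Suc j) x) ((T^^Suc j) x) \<le> R2 * ip ((T^^j) x) ((T^^j) x)" using assms(1) by simp
  also have "\<dots> \<le> R2 * (R2^j * ip x x)" using Suc.IH assms(2) by (rule mult_left_mono)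
  finally show ?case by simp
qed

lemma iter_bound:
  fixes T :: "('v::finite \<Rightarrow> real) \<Rightarrow> 'v \<Rightarrow> real"
  assumes T: "lin T" and sym: "\<And>x y. ip (T x) y = ip x (T y)"
    and Q: "\<And>x. \<bar>ip x (T x)\<bar> \<le> R * ip x x" and R: "R \<ge> 0"
  shows "ip y ((T^^l) y) \<le> R^l * ip y y"
proof -
  have N: "ip (T x) (T x) \<le> R^2 * ip x x" for x by (rule norm_from_quad[OF T sym Q R])
  have "l = l div 2 + l div 2 \<or> l = l div 2 + Suc (l div 2)" by presburger
  then obtain j where "l = j + j \<or> l = j + Suc j" by blast
  then show ?thesis
  proof
    assume l: "l = j + j"
    have "ip y ((T^^l) y) = ip ((T^^j) y) ((T^^j) y)" unfolding l by (rule ip_funpow[OF sym])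
    also have "\<dots> \<le> (R^2)^j * ip y y" by (rule norm_iter[OF N]) simp
    also have "(R^2)^j = R^l" unfolding l by (simp add: power_mult[symmetric] mult_2[symmetric])
    finally show ?thesis .
  next
    assume l: "l = j + Suc j"
    have "ip y ((T^^l) y) = ip ((T^^j) y) ((T^^Suc j) y)" unfolding l by (rule ip_funpow[OF sym])
    also have "\<dots> = ip ((T^^j) y) (T ((T^^j) y))" by simp
    also have "\<dots> \<le> R * ip ((T^^j) y) ((T^^j) y)" using Q[of "(T^^j) y"] by linarith
    also have "\<dots> \<le> R * ((R^2)^j * ip y y)" by (intro mult_left_mono norm_iter[OF N] R) simp
    also have "R * ((R^2)^j * ip y y) = R^l * ip y y" unfolding l
      by (simp add: power_mult[symmetric] mult_2[symmetric] power_add)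
    finally show ?thesis .
  qed
qed



definition MM :: "('v::finite \<Rightarrow> 'v \<Rightarrow> bool) \<Rightarrow> 'v set \<Rightarrow> ('v \<Rightarrow> real) \<Rightarrow> 'v \<Rightarrow> real" where
  "MM E C x = restr C (adj_op E (restr C x))"

definition WW :: "('v \<Rightarrow> 'v \<Rightarrow> bool) \<Rightarrow> 'v set \<Rightarrow> nat \<Rightarrow> 'v \<Rightarrow> 'v list set" where
  "WW E C l v = {xs \<in> avoiding_walks E C l. hd xs = v}"

lemma g_zero: "v \<in> C \<Longrightarrow> ((MM E C)^^l) (oneU C) v = 0"
  by (cases l) (auto simp: oneU_def MM_def restr_def)

lemma restr_g: "restr C (((MM E C)^^l) (oneU C)) = ((MM E C)^^l) (oneU C)"
  by (auto simp: restr_def fun_eq_iff g_zero)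

lemma fin_aw: "finite (avoiding_walks E C l :: ('v::finite) list set)"
proof (rule finite_subset)
  show "avoiding_walks E C l \<subseteq> {xs. set xs \<subseteq> (UNIV::'v set) \<and> length xs = Suc l}"
    unfolding avoiding_walks_def by auto
  show "finite {xs. set xs \<subseteq> (UNIV::'v set) \<and> length xs = Suc l}"
    by (rule finite_lists_length_eq) simp
qed

lemma W0: "WW E C 0 v = (if v \<in> C then {} else {[v]})"
  unfolding WW_def avoiding_walks_def by (auto simp: length_Suc_conv)

lemma WSuc: "WW E C (Suc l) v = (if v \<in> C then {} else (Cons v) ` (\<Union>w\<in>{w. E v w}. WW E C l w))"
proof (intro set_eqI iffI)
  fix xs assume "xs \<in> WW E C (Suc l) v"
  then have xs: "length xs = Suc (Suc l)" "successively E xs" "set xs \<inter> C = {}" "hd xs = v"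
    unfolding WW_def avoiding_walks_def by auto
  then obtain ys where ys: "xs = v # ys" "length ys = Suc l" by (auto simp: length_Suc_conv)
  then have "ys \<noteq> []" by auto
  then have "E v (hd ys)" "successively E ys" using xs(2) ys(1) by (auto simp: successively_Cons)
  moreover have "v \<notin> C" "set ys \<inter> C = {}" using xs(3) ys(1) by auto
  ultimately show "xs \<in> (if v \<in> C then {} else (Cons v) ` (\<Union>w\<in>{w. E v w}. WW E C l w))"
    using ys unfolding WW_def avoiding_walks_def by auto
next
  fix xs assume a: "xs \<in> (if v \<in> C then {} else (Cons v) ` (\<Union>w\<in>{w. E v w}. WW E C l w))"
  then have v: "v \<notin> C" by (auto split: if_splits)
  with a obtain w ys where ys: "xs = v # ys" "E v w" "ys \<in> WW E C l w" by auto
  then have "length ys = Suc l" "successively E ys" "set ys \<inter> C = {}" "hd ys = w"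
    unfolding WW_def avoiding_walks_def by auto
  then show "xs \<in> WW E C (Suc l) v"
    using ys v unfolding WW_def avoiding_walks_def by (auto simp: successively_Cons)
qed

lemma fin_W: "finite (WW E C l (v::'v::finite))"
  unfolding WW_def using fin_aw[of E C l] by simp

lemma count: "real (card (WW E C l v)) = ((MM E C)^^l) (oneU C) (v::'v::finite)"
proof (induction l arbitrary: v)
  case 0 then show ?case by (simp add: W0 oneU_def)
next
  case (Suc l)
  show ?case
  proof (cases "v \<in> C")
    case True then show ?thesis by (simp add: WSuc MM_def restr_def)
  next
    case False
    have "card (WW E C (Suc l) v) = card (\<Union>w\<in>{w. E v w}. WW E C l w)"
      using False unfolding WSuc by (simp add: card_image)
    also have "\<dots> = (\<Sum>w\<in>{w. E v w}. card (WW E C l w))"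
      by (rule card_UN_disjoint) (auto simp: fin_W[unfolded WW_def] WW_def)
    finally have "real (card (WW E C (Suc l) v)) = (\<Sum>w\<in>{w. E v w}. ((MM E C)^^l) (oneU C) w)"
      using Suc.IH by simp
    also have "\<dots> = ((MM E C)^^(Suc l)) (oneU C) v"
      using False by (simp add: MM_def restr_g) (simp add: restr_def adj_op_def)
    finally show ?thesis .
  qed
qed

lemma total: "real (card (avoiding_walks E C l)) = ip (oneU C) (((MM E C)^^l) (oneU (C::'v::finite set)))"
proof -
  have "avoiding_walks E C l = (\<Union>v\<in>UNIV. WW E C l v)"
    unfolding WW_def by auto
  moreover have "card (\<Union>v\<in>UNIV. WW E C l v) = (\<Sum>v\<in>UNIV. card (WW E C l v))"
    by (rule card_UN_disjoint) (auto simp: fin_W[unfolded WW_def] WW_def)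
  ultimately have "card (avoiding_walks E C l) = (\<Sum>v\<in>UNIV. card (WW E C l v))" by simp
  then have "real (card (avoiding_walks E C l)) = (\<Sum>v\<in>UNIV. ((MM E C)^^l) (oneU C) v)"
    by (simp add: count)
  also have "\<dots> = ip (oneU C) (((MM E C)^^l) (oneU C))"
    unfolding ip_def by (intro sum.cong refl) (auto simp: oneU_def g_zero)
  finally show ?thesis .
qed

lemma ip_oneU:
  fixes C :: "'v::finite set"
  shows "ip (oneU C) (oneU C) = real (card (UNIV::'v set) - card C)"
proof -
  have "ip (oneU C) (oneU C) = (\<Sum>v\<in>UNIV. if v \<in> UNIV - C then 1 else 0)"
    unfolding ip_def oneU_def by (intro sum.cong refl) auto
  also have "\<dots> = real (card (UNIV - C))" by (simp add: sum.If_cases Int_absorb1 Compl_eq_Diff_UNIV[symmetric] Collect_neg_eq)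
  also have "card (UNIV - C) = card (UNIV::'v set) - card C" using card_Diff_subset[of C UNIV] by simp
  finally show ?thesis .
qed

theorem mainTheorem7:
  fixes E :: "'v::finite \<Rightarrow> 'v \<Rightarrow> bool"
    and k :: nat and p :: "'v \<Rightarrow> nat" and S :: "nat \<Rightarrow> nat \<Rightarrow> nat"
    and C :: "'v set" and l :: nat
  assumes "simple_connected_graph E"
    and "S_regular E k p S"
    and "card (UNIV :: 'v set) > k"
    and "C \<subset> UNIV"
  shows "real (card (avoiding_walks E C l))
     \<le> real (card (UNIV :: 'v set) - card C) *
        (lambda_S k S * (1 - (MIN i\<in>{..<k}. real (card (C \<inter> cell p i)) / real (card (cell p i))))
         + lambda_B E k p * (MIN i\<in>{..<k}. real (card (C \<inter> cell p i)) / real (card (cell p i)))) ^ l"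
proof -
  interpret gsetup E k p S
    using assms(1,2) unfolding simple_connected_graph_def by unfold_locales auto
  define R where "R = lambda_S k S * (1 - cmin C) + lambda_B E k p * cmin C"
  obtain u where u: "u \<notin> C" using assms(4) by blast
  have R0: "R \<ge> 0"
  proof -
    define x where "x v = (if v = u then 1 else (0::real))" for v
    have "\<bar>ip x (A x)\<bar> \<le> R * ip x x" unfolding R_def
      by (rule rayleigh_U_abs[OF assms(3)]) (use u in \<open>auto simp: x_def\<close>)
    moreover have "ip x x = 1" unfolding ip_def x_def by (simp add: if_distrib cong: if_cong)
    ultimately have "\<bar>ip x (A x)\<bar> \<le> R" by simp
    moreover have "0 \<le> \<bar>ip x (A x)\<bar>" by simp
    ultimately show ?thesis by linarith
  qed
  have Q: "\<bar>ip x (MM E C x)\<bar> \<le> R * ip x x" for x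
  proof -
    have "ip x (MM E C x) = ip (restr C x) (A (restr C x))"
      unfolding MM_def by (simp add: ip_comm[of x] ip_restr)
    then have "\<bar>ip x (MM E C x)\<bar> \<le> R * ip (restr C x) (restr C x)"
      unfolding R_def using rayleigh_U_abs[OF assms(3), of C "restr C x"] by (simp add: restr_def)
    also have "\<dots> \<le> R * ip x x" using R0 ip_restr_self[of C x] by (intro mult_left_mono)
    finally show ?thesis .
  qed
  have linM: "lin (MM E C)" unfolding MM_def using restr_lin[OF lin_A] .
  have symM: "\<And>x y. ip (MM E C x) y = ip x (MM E C y)" unfolding MM_def by (rule restr_sym[OF sym_A])
  have "real (card (avoiding_walks E C l)) = ip (oneU C) (((MM E C)^^l) (oneU C))" by (rule total)
  also have "\<dots> \<le> R^l * ip (oneU C) (oneU C)" by (rule iter_bound[OF linM symM Q R0])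
  also have "\<dots> = real (card (UNIV :: 'v set) - card C) * R^l" by (simp add: ip_oneU)
  finally show ?thesis unfolding R_def cmin_def .
qed


end
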